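(* Let $G$ be a finite group acting linearly, isometrically and effectively on $\mathbb{R}^n$, let $X$ be a random variable with $\mathbb{E}(\|X\|^2)<+\infty$ and $t_0=\mathbb{E}(X)$ a regular point. If the support of the law of $X$ is a compact set contained in the interior of $\mathrm{Cone}(t_0)$, then $t_0$ is a local minimiser of $F$ (i.e. $[t_0]$ is a Karcher mean of $[X]$).
   Context: A group action is linear and isometric if each $x\mapsto g\cdot x$ is linear with $\|g\cdot x\|=\|x\|$, and effective if $x\mapsto g\cdot x$ is the identity only for $g=e_G$. A point $m$ is regular if $\{g: g\cdot m=m\}=\{e_G\}$. For regular $m$, $\mathrm{Cone}(m)=\{x: \|x-m\|\le\|x-g\cdot m\| \ \forall g\in G\}$. The support of $X$ is the set of $x$ with $\mathbb{P}(X\in B(x,r))>0$ for all $r>0$. $F(m)=\mathbb{E}\big(\min_{g\in G}\|g\cdot X-m\|^2\big)$. *)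

theory Defs
  imports "HOL-Analysis.Analysis" "HOL-Probability.Probability" "HOL-Algebra.Group_Action"
begin

definition lin_iso_eff_action :: "('g, 'b) monoid_scheme \<Rightarrow> ('g \<Rightarrow> real^'n \<Rightarrow> real^'n) \<Rightarrow> bool" where
  "lin_iso_eff_action G act \<longleftrightarrow>
     group_action G (UNIV :: (real^'n) set) act \<and>
     (\<forall>g\<in>carrier G. linear (act g)) \<and>
     (\<forall>g\<in>carrier G. \<forall>x. norm (act g x) = norm x) \<and>
     (\<forall>g\<in>carrier G. (\<forall>x. act g x = x) \<longrightarrow> g = \<one>\<^bsub>G\<^esub>)"

definition regular_point :: "('g, 'b) monoid_scheme \<Rightarrow> ('g \<Rightarrow> real^'n \<Rightarrow> real^'n) \<Rightarrow> real^'n \<Rightarrow> bool" where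
  "regular_point G act m \<longleftrightarrow> {g \<in> carrier G. act g m = m} = {\<one>\<^bsub>G\<^esub>}"

definition Cone :: "('g, 'b) monoid_scheme \<Rightarrow> ('g \<Rightarrow> real^'n \<Rightarrow> real^'n) \<Rightarrow> real^'n \<Rightarrow> (real^'n) set" where
  "Cone G act m = {x. \<forall>g\<in>carrier G. norm (x - m) \<le> norm (x - act g m)}"

definition support_of :: "'a measure \<Rightarrow> ('a \<Rightarrow> real^'n) \<Rightarrow> (real^'n) set" where
  "support_of M X = {x. \<forall>r>0. measure M (X -` ball x r \<inter> space M) > 0}"

definition Fmean :: "('g, 'b) monoid_scheme \<Rightarrow> ('g \<Rightarrow> real^'n \<Rightarrow> real^'n) \<Rightarrow> 'a measure \<Rightarrow> ('a \<Rightarrow> real^'n) \<Rightarrow> real^'n \<Rightarrow> real" where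
  "Fmean G act M X m = (\<integral>\<omega>. (MIN g\<in>carrier G. (norm (act g (X \<omega>) - m))\<^sup>2) \<partial>M)"

end

theory Submission
  imports Defs
begin


lemma AE_support:
  fixes X :: "'a \<Rightarrow> real^'n"
  assumes P: "prob_space M" and Xm: "X \<in> borel_measurable M"
  shows "AE \<omega> in M. X \<omega> \<in> support_of M X"
proof -
  interpret prob_space M by (rule P)
  define F where "F = {ball x r | x r. r > 0 \<and> measure M (X -` ball x r \<inter> space M) = 0}"
  have "\<And>S. S \<in> F \<Longrightarrow> open S" unfolding F_def by auto
  then obtain F' where F': "F' \<subseteq> F" "countable F'" "\<Union>F' = \<Union>F" using Lindelof by metis
  have "AE \<omega> in M. \<forall>B\<in>F'. X \<omega> \<notin> B"
  proof (subst AE_ball_countable[OF F'(2)], intro ballI)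
    fix B assume "B \<in> F'"
    then obtain x r where B: "B = ball x r" and m0: "measure M (X -` ball x r \<inter> space M) = 0"
      using F'(1) unfolding F_def by auto
    have meas: "X -` ball x r \<inter> space M \<in> sets M" using Xm by measurable
    show "AE \<omega> in M. X \<omega> \<notin> B"
      by (rule AE_I[where N="X -` ball x r \<inter> space M"]) (use B m0 meas emeasure_eq_measure in auto)
  qed
  moreover have "X \<omega> \<in> support_of M X" if "\<forall>B\<in>F'. X \<omega> \<notin> B" for \<omega>
  proof (rule ccontr)
    assume "X \<omega> \<notin> support_of M X"
    then obtain r where r: "r > 0" "\<not> measure M (X -` ball (X \<omega>) r \<inter> space M) > 0"
      unfolding support_of_def by auto
    hence "measure M (X -` ball (X \<omega>) r \<inter> space M) = 0" using measure_nonneg[of M "X -` ball (X \<omega>) r \<inter> space M"] by linarith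
    hence "ball (X \<omega>) r \<in> F" using r unfolding F_def by auto
    hence "X \<omega> \<in> \<Union>F" using r by (metis UnionI centre_in_ball)
    hence "X \<omega> \<in> \<Union>F'" using F'(3) by simp
    thus False using that by auto
  qed
  ultimately show ?thesis by (auto elim: AE_mp)
qed



lemma norm_split: fixes a m t :: "real^'n"
  shows "(norm (a - m))\<^sup>2 = (norm (a - t))\<^sup>2 + 2 * ((a - t) \<bullet> (t - m)) + (norm (t - m))\<^sup>2"
  by (simp add: power2_norm_eq_inner inner_simps algebra_simps inner_commute)

lemma norm_expand: fixes a m :: "real^'n"
  shows "(norm (a - m))\<^sup>2 = (norm a)\<^sup>2 - 2 * (a \<bullet> m) + (norm m)\<^sup>2"
  by (simp add: power2_norm_eq_inner inner_simps algebra_simps inner_commute)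

lemma lin_meas: fixes f :: "real^'n \<Rightarrow> real^'n"
  assumes "linear f" shows "f \<in> borel_measurable borel"
  using assms by (intro borel_measurable_continuous_onI linear_continuous_on linear_conv_bounded_linear[THEN iffD1])

lemma sqb: "(a::real) \<le> norm (1 + a\<^sup>2)"
proof -
  have "2*a \<le> a\<^sup>2 + 1" using sum_squares_bound[of a 1] by simp
  moreover have "0 \<le> a\<^sup>2" by simp
  moreover have "norm (1 + a\<^sup>2) = 1 + a\<^sup>2" using \<open>0 \<le> a\<^sup>2\<close> by simp
  ultimately show ?thesis by linarith
qed

lemma integrable_sq_shift:
  fixes X :: "'a \<Rightarrow> real^'n"
  assumes P: "prob_space M" and Xm: "X \<in> borel_measurable M"
    and I: "integrable M (\<lambda>\<omega>. (norm (X \<omega>))\<^sup>2)"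
  shows "integrable M (\<lambda>\<omega>. (norm (X \<omega> - c))\<^sup>2)"
proof -
  interpret prob_space M by (rule P)
  show ?thesis
  proof (rule Bochner_Integration.integrable_bound[where f="\<lambda>\<omega>. 2 * (norm (X \<omega>))\<^sup>2 + 2 * (norm c)\<^sup>2"])
    show "integrable M (\<lambda>\<omega>. 2 * (norm (X \<omega>))\<^sup>2 + 2 * (norm c)\<^sup>2)" using I by auto
    show "(\<lambda>\<omega>. (norm (X \<omega> - c))\<^sup>2) \<in> borel_measurable M" using Xm by measurable
    show "AE \<omega> in M. norm ((norm (X \<omega> - c))\<^sup>2) \<le> norm (2 * (norm (X \<omega>))\<^sup>2 + 2 * (norm c)\<^sup>2)"
    proof (intro AE_I2)
      fix \<omega>
      have "norm (X \<omega> - c) \<le> norm (X \<omega>) + norm c" by (rule norm_triangle_ineq4)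
      hence "(norm (X \<omega> - c))\<^sup>2 \<le> (norm (X \<omega>) + norm c)\<^sup>2" by (intro power_mono) auto
      also have "\<dots> \<le> 2 * (norm (X \<omega>))\<^sup>2 + 2 * (norm c)\<^sup>2"
        using sum_squares_bound[of "norm (X \<omega>)" "norm c"] by (simp add: power2_sum)
      finally show "norm ((norm (X \<omega> - c))\<^sup>2) \<le> norm (2 * (norm (X \<omega>))\<^sup>2 + 2 * (norm c)\<^sup>2)" by simp
    qed
  qed
qed

lemma integrable_X:
  fixes X :: "'a \<Rightarrow> real^'n"
  assumes P: "prob_space M" and Xm: "X \<in> borel_measurable M"
    and I: "integrable M (\<lambda>\<omega>. (norm (X \<omega>))\<^sup>2)"
  shows "integrable M X"
proof -
  interpret prob_space M by (rule P)
  show ?thesis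
  proof (rule Bochner_Integration.integrable_bound[where f="\<lambda>\<omega>. 1 + (norm (X \<omega>))\<^sup>2"])
    show "integrable M (\<lambda>\<omega>. 1 + (norm (X \<omega>))\<^sup>2)" using I by auto
    show "X \<in> borel_measurable M" by (rule Xm)
    show "AE \<omega> in M. norm (X \<omega>) \<le> norm (1 + (norm (X \<omega>))\<^sup>2)"
    proof (intro AE_I2)
      fix \<omega> show "norm (X \<omega>) \<le> norm (1 + (norm (X \<omega>))\<^sup>2)"
        by (rule sqb)
    qed
  qed
qed

lemma shift_integral:
  fixes X :: "'a \<Rightarrow> real^'n"
  assumes P: "prob_space M" and Xm: "X \<in> borel_measurable M"
    and I: "integrable M (\<lambda>\<omega>. (norm (X \<omega>))\<^sup>2)"
    and t: "t = (\<integral>\<omega>. X \<omega> \<partial>M)"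
  shows "(\<integral>\<omega>. (norm (X \<omega> - m))\<^sup>2 \<partial>M) = (\<integral>\<omega>. (norm (X \<omega> - t))\<^sup>2 \<partial>M) + (norm (t - m))\<^sup>2"
proof -
  interpret prob_space M by (rule P)
  have iX: "integrable M X" by (rule integrable_X[OF P Xm I])
  have i1: "integrable M (\<lambda>\<omega>. (norm (X \<omega> - t))\<^sup>2)" by (rule integrable_sq_shift[OF P Xm I])
  have i2: "integrable M (\<lambda>\<omega>. X \<omega> \<bullet> (t - m))" using iX by auto
  have "(\<integral>\<omega>. (norm (X \<omega> - m))\<^sup>2 \<partial>M) =
     (\<integral>\<omega>. (norm (X \<omega> - t))\<^sup>2 + (2 * (X \<omega> \<bullet> (t - m)) + (- 2 * (t \<bullet> (t - m)) + (norm (t - m))\<^sup>2)) \<partial>M)"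
    by (intro Bochner_Integration.integral_cong refl, subst norm_split[of _ m t]) (simp add: inner_simps algebra_simps)
  also have "\<dots> = (\<integral>\<omega>. (norm (X \<omega> - t))\<^sup>2 \<partial>M) + (2 * (t \<bullet> (t - m)) + (- 2 * (t \<bullet> (t - m)) + (norm (t - m))\<^sup>2))"
    using i1 i2 t iX integral_inner_left[of "t - m" M X] prob_space by (simp add: Bochner_Integration.integral_add)
  finally show ?thesis by simp
qed



lemma main_geom:
  fixes G :: "('g, 'b) monoid_scheme"
    and act :: "'g \<Rightarrow> real^'n \<Rightarrow> real^'n"
  assumes grp: "group G"
    and fin: "finite (carrier G)"
    and A: "lin_iso_eff_action G act"
    and reg: "regular_point G act t0"
    and K: "compact K"
    and KC: "K \<subseteq> interior (Cone G act t0)"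
  shows "\<exists>e>0. \<forall>m. dist m t0 < e \<longrightarrow> (\<forall>x\<in>K. (MIN g\<in>carrier G. (norm (act g x - m))\<^sup>2) = (norm (x - m))\<^sup>2)"
proof -
  interpret group G by (rule grp)
  have ga: "group_action G UNIV act" and lin: "\<And>g. g \<in> carrier G \<Longrightarrow> linear (act g)"
    and iso: "\<And>g x. g \<in> carrier G \<Longrightarrow> norm (act g x) = norm x"
    using A unfolding lin_iso_eff_action_def by auto
  interpret ga: group_action G UNIV act by (rule ga)
  have act1: "act \<one>\<^bsub>G\<^esub> x = x" for x using fun_cong[OF ga.id_eq_one, of x] by simp
  have inner_pres: "act g x \<bullet> act g y = x \<bullet> y" if "g \<in> carrier G" for g x y
  proof -
    have "orthogonal_transformation (act g)"
      unfolding orthogonal_transformation using lin[OF that] iso[OF that] by blast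
    thus ?thesis unfolding orthogonal_transformation_def by blast
  qed
  have adj: "act g x \<bullet> m = x \<bullet> act (inv\<^bsub>G\<^esub> g) m" if g: "g \<in> carrier G" for g x m
  proof -
    have "act g (act (inv\<^bsub>G\<^esub> g) m) = m"
      using ga.composition_rule[of m g "inv\<^bsub>G\<^esub> g"] g act1 by simp
    hence "act g x \<bullet> m = act g x \<bullet> act g (act (inv\<^bsub>G\<^esub> g) m)" by simp
    also have "\<dots> = x \<bullet> act (inv\<^bsub>G\<^esub> g) m" by (rule inner_pres[OF g])
    finally show ?thesis .
  qed
  have cone_ineq: "x \<bullet> act h t0 \<le> x \<bullet> t0" if "x \<in> Cone G act t0" "h \<in> carrier G" for x h
  proof -
    have "norm (x - t0) \<le> norm (x - act h t0)" using that unfolding Cone_def by auto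
    hence "(norm (x - t0))\<^sup>2 \<le> (norm (x - act h t0))\<^sup>2" by (intro power_mono) auto
    hence "(x - t0) \<bullet> (x - t0) \<le> (x - act h t0) \<bullet> (x - act h t0)"
      by (simp add: power2_norm_eq_inner)
    hence "x \<bullet> x - 2 * (x \<bullet> t0) + t0 \<bullet> t0 \<le> x \<bullet> x - 2 * (x \<bullet> act h t0) + act h t0 \<bullet> act h t0"
      by (simp add: inner_simps inner_commute)
    thus ?thesis using inner_pres[OF that(2), of t0 t0] by simp
  qed
  obtain B where B: "B > 0" "\<And>x. x \<in> K \<Longrightarrow> norm x \<le> B"
    using compact_imp_bounded[OF K] bounded_pos by metis
  have claim: "\<exists>e>0. \<forall>m. dist m t0 < e \<longrightarrow> (\<forall>x\<in>K. x \<bullet> act h m \<le> x \<bullet> m)"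
    if h: "h \<in> carrier G" for h
  proof (cases "h = \<one>\<^bsub>G\<^esub>")
    case True
    thus ?thesis using act1 by (intro exI[of _ 1]) auto
  next
    case False
    define v where "v = act h t0 - t0"
    have vnz: "v \<noteq> 0"
    proof
      assume "v = 0"
      hence "h \<in> {g \<in> carrier G. act g t0 = t0}" using h unfolding v_def by auto
      thus False using reg False unfolding regular_point_def by auto
    qed
    have neg: "x \<bullet> v < 0" if x: "x \<in> K" for x
    proof -
      obtain r where r: "r > 0" "ball x r \<subseteq> Cone G act t0"
        using KC x by (meson interior_subset open_contains_ball_eq open_interior subsetD subset_trans)
      define y where "y = x + (r / 2 / norm v) *\<^sub>R v"
      have "dist x y = r / 2" using vnz r unfolding y_def by (simp add: dist_norm)
      hence "y \<in> Cone G act t0" using r by auto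
      hence "y \<bullet> v \<le> 0" using cone_ineq[OF _ h] unfolding v_def by (simp add: inner_simps)
      moreover have "y \<bullet> v = x \<bullet> v + r / 2 * norm v"
        using vnz unfolding y_def by (simp add: inner_simps power2_norm_eq_inner[symmetric] power2_eq_square)
      ultimately show ?thesis using r vnz by (smt (verit) divide_pos_pos mult_pos_pos zero_less_norm_iff)
    qed
    obtain \<delta> where \<delta>: "\<delta> > 0" "\<And>x. x \<in> K \<Longrightarrow> x \<bullet> v \<le> - \<delta>"
    proof (cases "K = {}")
      case True thus ?thesis using that[of 1] by auto
    next
      case False
      have "continuous_on K (\<lambda>x. x \<bullet> v)" by (intro continuous_intros)
      then obtain x0 where "x0 \<in> K" "\<And>x. x \<in> K \<Longrightarrow> x \<bullet> v \<le> x0 \<bullet> v"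
        using compact_attains_sup[OF compact_continuous_image[OF _ K] ] False
        by (metis (no_types, lifting) K compact_attains_sup False continuous_attains_sup)
      thus ?thesis using that[of "- (x0 \<bullet> v)"] neg by force
    qed
    show ?thesis
    proof (intro exI[of _ "\<delta> / (2 * B)"] conjI allI impI ballI)
      show "\<delta> / (2 * B) > 0" using \<delta> B by simp
      fix m x assume dm: "dist m t0 < \<delta> / (2 * B)" and x: "x \<in> K"
      define w where "w = m - t0"
      have nw: "norm w < \<delta> / (2 * B)" using dm unfolding w_def dist_norm .
      have eq: "act h m - m = v + (act h w - w)"
        using linear_diff[OF lin[OF h]] unfolding v_def w_def by (simp add: algebra_simps)
      have "norm (act h w - w) \<le> 2 * norm w"
        using norm_triangle_ineq4[of "act h w" w] iso[OF h, of w] by simp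
      hence "x \<bullet> (act h w - w) \<le> B * (2 * norm w)"
        using norm_cauchy_schwarz[of x "act h w - w"] B(2)[OF x]
        by (smt (verit) mult_mono norm_ge_zero)
      also have "\<dots> < \<delta>" using nw B(1) by (simp add: field_simps)
      finally have "x \<bullet> (act h m - m) < 0" using \<delta>(2)[OF x] unfolding eq by (simp add: inner_simps)
      thus "x \<bullet> act h m \<le> x \<bullet> m" by (simp add: inner_simps)
    qed
  qed
  then obtain E where E: "\<And>h. h \<in> carrier G \<Longrightarrow> E h > 0 \<and> (\<forall>m. dist m t0 < E h \<longrightarrow> (\<forall>x\<in>K. x \<bullet> act h m \<le> x \<bullet> m))"
    by metis
  define e where "e = Min (E ` carrier G)"
  have ne: "carrier G \<noteq> {}" by auto
  have epos: "e > 0" unfolding e_def using fin ne E by (simp add: Min_gr_iff)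
  have ele: "e \<le> E h" if "h \<in> carrier G" for h unfolding e_def using fin that by simp
  show ?thesis
  proof (intro exI[of _ e] conjI allI impI ballI epos)
    fix m x assume dm: "dist m t0 < e" and x: "x \<in> K"
    have ge: "(norm (x - m))\<^sup>2 \<le> (norm (act g x - m))\<^sup>2" if g: "g \<in> carrier G" for g
    proof -
      have ig: "inv\<^bsub>G\<^esub> g \<in> carrier G" using g by simp
      have "x \<bullet> act (inv\<^bsub>G\<^esub> g) m \<le> x \<bullet> m" using E[OF ig] ele[OF ig] dm x by auto
      hence "act g x \<bullet> m \<le> x \<bullet> m" using adj[OF g] by simp
      thus ?thesis using norm_expand[of x m] norm_expand[of "act g x" m] iso[OF g, of x] by simp
    qed
    show "(MIN g\<in>carrier G. (norm (act g x - m))\<^sup>2) = (norm (x - m))\<^sup>2"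
    proof (rule antisym)
      show "(MIN g\<in>carrier G. (norm (act g x - m))\<^sup>2) \<le> (norm (x - m))\<^sup>2"
        using fin act1[of x] by (intro Min_le_iff[THEN iffD2]) (auto intro!: bexI[of _ "\<one>\<^bsub>G\<^esub>"])
      show "(norm (x - m))\<^sup>2 \<le> (MIN g\<in>carrier G. (norm (act g x - m))\<^sup>2)"
        using fin ne ge by (simp add: Min_ge_iff)
    qed
  qed
qed

theorem mainTheorem5:
  fixes G :: "('g, 'b) monoid_scheme"
    and act :: "'g \<Rightarrow> real^'n \<Rightarrow> real^'n"
    and M :: "'a measure"
    and X :: "'a \<Rightarrow> real^'n"
  assumes "group G"
    and "finite (carrier G)"
    and "lin_iso_eff_action G act"
    and "prob_space M"
    and "X \<in> borel_measurable M"
    and "integrable M (\<lambda>\<omega>. (norm (X \<omega>))\<^sup>2)"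
    and "t0 = (\<integral>\<omega>. X \<omega> \<partial>M)"
    and "regular_point G act t0"
    and "compact (support_of M X)"
    and "support_of M X \<subseteq> interior (Cone G act t0)"
  shows "\<exists>e>0. \<forall>m. dist m t0 < e \<longrightarrow> Fmean G act M X t0 \<le> Fmean G act M X m"
proof -
  obtain e where e: "e > 0" and
    H: "\<And>m. dist m t0 < e \<Longrightarrow> (\<forall>x\<in>support_of M X. (MIN g\<in>carrier G. (norm (act g x - m))\<^sup>2) = (norm (x - m))\<^sup>2)"
    using main_geom[OF assms(1,2,3,8,9,10)] by blast
  have lin: "\<And>g. g \<in> carrier G \<Longrightarrow> linear (act g)"
    using assms(3) unfolding lin_iso_eff_action_def by auto
  have AEs: "AE \<omega> in M. X \<omega> \<in> support_of M X" by (rule AE_support[OF assms(4,5)])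
  have Fm: "Fmean G act M X m = (\<integral>\<omega>. (norm (X \<omega> - m))\<^sup>2 \<partial>M)" if dm: "dist m t0 < e" for m
    unfolding Fmean_def
  proof (rule integral_cong_AE)
    have "(\<lambda>\<omega>. (norm (act g (X \<omega>) - m))\<^sup>2) \<in> borel_measurable M" if "g \<in> carrier G" for g
    proof -
      have "(\<lambda>\<omega>. act g (X \<omega>)) \<in> borel_measurable M"
        using measurable_compose[OF assms(5) lin_meas[OF lin[OF that]]] by (simp add: comp_def)
      hence "(\<lambda>\<omega>. act g (X \<omega>) - m) \<in> borel_measurable M"
        by (rule borel_measurable_diff[OF _ borel_measurable_const])
      hence "(\<lambda>\<omega>. norm (act g (X \<omega>) - m)) \<in> borel_measurable M"
        using measurable_compose[OF _ borel_measurable_norm] by (simp add: comp_def)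
      thus ?thesis by (rule borel_measurable_power)
    qed
    then show "(\<lambda>\<omega>. MIN g\<in>carrier G. (norm (act g (X \<omega>) - m))\<^sup>2) \<in> borel_measurable M"
      by (rule borel_measurable_Min[OF assms(2)])
    show "(\<lambda>\<omega>. (norm (X \<omega> - m))\<^sup>2) \<in> borel_measurable M" using assms(5) by measurable
    show "AE \<omega> in M. (MIN g\<in>carrier G. (norm (act g (X \<omega>) - m))\<^sup>2) = (norm (X \<omega> - m))\<^sup>2"
      by (rule AE_mp[OF AEs], rule AE_I2, rule impI) (use H[OF dm] in blast)
  qed
  show ?thesis
  proof (intro exI[of _ e] conjI allI impI e)
    fix m assume dm: "dist m t0 < e"
    have "Fmean G act M X t0 = (\<integral>\<omega>. (norm (X \<omega> - t0))\<^sup>2 \<partial>M)" using Fm[of t0] e by simp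
    also have "\<dots> \<le> (\<integral>\<omega>. (norm (X \<omega> - t0))\<^sup>2 \<partial>M) + (norm (t0 - m))\<^sup>2" by simp
    also have "\<dots> = (\<integral>\<omega>. (norm (X \<omega> - m))\<^sup>2 \<partial>M)"
      using shift_integral[OF assms(4,5,6,7), of m] by linarith
    also have "\<dots> = Fmean G act M X m" using Fm[OF dm] by simp
    finally show "Fmean G act M X t0 \<le> Fmean G act M X m" .
  qed
qed

end
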